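(* Let $G$ be a directed graph, let $a, b, k \geq 1$ be integers, and let $D$ be a well-linked set in $G$ of size $2(ab(2k-2)+1)$. If $G$ does not contain a family of $k$ directed cycles such that every vertex of $G$ is in at most two of the cycles, then there exist paths $P_1,\ldots,P_a$ in $G$ and sets $A_i, B_i \subseteq V(P_i)$ for $1 \leq i \leq a$ such that: (1) the paths $P_1,\ldots,P_a$ are pairwise vertex-disjoint; (2) the sets $A_1,B_1,\ldots,A_a,B_a$ each have size $b$ and are pairwise disjoint; (3) for every $1 \leq i \leq a$, all vertices of $A_i$ appear on $P_i$ before all vertices of $B_i$; (4) $\bigcup_{i=1}^a (A_i \cup B_i)$ is well-linked in $G$.
   Context: For $A,B\subseteq V(G)$ with $|A|=|B|$, a linkage from $A$ to $B$ is a set of $|A|$ pairwise vertex-disjoint directed paths each starting in $A$ and ending in $B$. A set $W\subseteq V(G)$ is well-linked if for all $A,B\subseteq W$ with $|A|=|B|$ there is a linkage from $A$ to $B$ in $G-(W\setminus(A\cup B))$. *)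

theory Defs
  imports Main
begin

definition is_path :: "'a set \<Rightarrow> ('a \<times> 'a) set \<Rightarrow> 'a list \<Rightarrow> bool" where
  "is_path V E P \<longleftrightarrow> P \<noteq> [] \<and> distinct P \<and> set P \<subseteq> V \<and>
     (\<forall>i. Suc i < length P \<longrightarrow> (P ! i, P ! Suc i) \<in> E)"

definition linkage_in :: "'a set \<Rightarrow> ('a \<times> 'a) set \<Rightarrow> 'a set \<Rightarrow> 'a set \<Rightarrow> 'a set \<Rightarrow> bool" where
  "linkage_in V E U A B \<longleftrightarrow> (\<exists>Ps :: 'a list set.
     finite Ps \<and> card Ps = card A \<and>
     (\<forall>P\<in>Ps. is_path V E P \<and> set P \<subseteq> U \<and> hd P \<in> A \<and> last P \<in> B) \<and>
     (\<forall>P\<in>Ps. \<forall>Q\<in>Ps. P \<noteq> Q \<longrightarrow> set P \<inter> set Q = {}))"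

definition well_linked :: "'a set \<Rightarrow> ('a \<times> 'a) set \<Rightarrow> 'a set \<Rightarrow> bool" where
  "well_linked V E W \<longleftrightarrow> W \<subseteq> V \<and>
     (\<forall>A B. A \<subseteq> W \<longrightarrow> B \<subseteq> W \<longrightarrow> card A = card B \<longrightarrow>
        linkage_in V E (V - (W - (A \<union> B))) A B)"

definition is_cycle :: "'a set \<Rightarrow> ('a \<times> 'a) set \<Rightarrow> 'a list \<Rightarrow> bool" where
  "is_cycle V E C \<longleftrightarrow> C \<noteq> [] \<and> distinct C \<and> set C \<subseteq> V \<and>
     (\<forall>i < length C. (C ! i, C ! (Suc i mod length C)) \<in> E)"

definition cycle_edges :: "'a list \<Rightarrow> ('a \<times> 'a) set" where
  "cycle_edges C = {(C ! i, C ! (Suc i mod length C)) | i. i < length C}"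

definition half_integral_cycle_packing :: "'a set \<Rightarrow> ('a \<times> 'a) set \<Rightarrow> nat \<Rightarrow> bool" where
  "half_integral_cycle_packing V E k \<longleftrightarrow> (\<exists>Cs :: 'a list list.
     length Cs = k \<and> (\<forall>C\<in>set Cs. is_cycle V E C) \<and>
     (\<forall>i<k. \<forall>j<k. i \<noteq> j \<longrightarrow> cycle_edges (Cs ! i) \<noteq> cycle_edges (Cs ! j)) \<and>
     (\<forall>v\<in>V. card {i. i < k \<and> v \<in> set (Cs ! i)} \<le> 2))"

end

theory Submission
  imports Defs
begin

abbreviation walk :: "('a \<times> 'a) set \<Rightarrow> 'a list \<Rightarrow> bool" where
  "walk E xs \<equiv> successively (\<lambda>x y. (x,y) \<in> E) xs"

lemma is_path_iff: "is_path V E P \<longleftrightarrow> P \<noteq> [] \<and> distinct P \<and> set P \<subseteq> V \<and> walk E P"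
  unfolding is_path_def successively_conv_nth by blast

lemma is_cycle_I:
  assumes "C \<noteq> []" "distinct C" "set C \<subseteq> V" "walk E C" "(last C, hd C) \<in> E"
  shows "is_cycle V E C"
  unfolding is_cycle_def
proof (intro conjI assms allI impI)
  fix i assume i: "i < length C"
  show "(C ! i, C ! (Suc i mod length C)) \<in> E"
  proof (cases "Suc i < length C")
    case True then show ?thesis using successively_nth[OF assms(4) True] by simp
  next
    case False
    then have "i = length C - 1" using i by simp
    then show ?thesis using assms(1,5) by (simp add: last_conv_nth hd_conv_nth)
  qed
qed

lemma is_cycle_walk: "is_cycle V E C \<Longrightarrow> walk E C"
  unfolding is_cycle_def successively_conv_nth
  by (metis Suc_lessD mod_less)

lemma walk_appD: "walk E (xs @ ys) \<Longrightarrow> walk E xs \<and> walk E ys"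
  by (simp add: successively_append_iff)

lemma count_distinct: "distinct xs \<Longrightarrow> count_list xs v = (if v \<in> set xs then 1 else 0)"
  by (induction xs) auto

lemma set_cycle_edges: "C \<noteq> [] \<Longrightarrow> fst ` cycle_edges C = set C"
  unfolding cycle_edges_def by (auto simp: set_conv_nth image_iff) 

lemma closed_walk_decomp:
  assumes "w \<noteq> []" "walk E w" "(last w, hd w) \<in> E" "set w \<subseteq> V"
  shows "\<exists>Cs. (\<forall>C\<in>set Cs. is_cycle V E C) \<and> set w \<subseteq> \<Union>(set ` set Cs) \<and>
     (\<forall>v. length (filter (\<lambda>C. v \<in> set C) Cs) \<le> count_list w v)"
  using assms
proof (induction "length w" arbitrary: w rule: less_induct)
  case less
  show ?case
  proof (cases "distinct w")
    case True
    then have "is_cycle V E w" using less.prems by (intro is_cycle_I) auto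
    then show ?thesis using True
      by (intro exI[of _ "[w]"]) (auto simp: count_distinct)
  next
    case False
    then obtain xs ys zs y where w: "w = xs@[y]@ys@[y]@zs" using not_distinct_decomp by blast
    define w1 where "w1 = y # ys"
    define w2 where "w2 = xs @ y # zs"
    have l1: "length w1 < length w" "length w2 < length w" unfolding w1_def w2_def w by auto
    have wk: "walk E (xs @ [y])" "walk E (y # ys @ [y])" "walk E (y # zs)"
    proof -
      have W: "walk E (xs @ ((y # ys @ [y]) @ zs))" using less.prems(2) unfolding w by simp
      have W1: "walk E ((xs @ [y]) @ (ys @ [y] @ zs))" using less.prems(2) unfolding w by simp
      have W2: "walk E ((xs @ y # ys) @ (y # zs))" using less.prems(2) unfolding w by simp
      show "walk E (xs @ [y])" "walk E (y # ys @ [y])" "walk E (y # zs)"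
        using walk_appD[OF W] walk_appD[OF W1] walk_appD[OF W2] walk_appD[of E "y # ys @ [y]" zs] by auto
    qed
    have c1: "walk E w1 \<and> (last w1, hd w1) \<in> E"
      using wk(2) unfolding w1_def
      using successively_append_iff[of _ "y # ys" "[y]"] by simp
    have c2: "walk E w2" using wk(1,3) unfolding w2_def
      by (auto simp: successively_append_iff successively_Cons)
    have "last w2 = last w" "hd w2 = hd w" unfolding w2_def w
      by (cases xs; cases zs; simp)+
    then have c2': "(last w2, hd w2) \<in> E" using less.prems(3) by simp
    obtain Cs1 where C1: "\<forall>C\<in>set Cs1. is_cycle V E C" "set w1 \<subseteq> \<Union>(set ` set Cs1)"
        "\<forall>v. length (filter (\<lambda>C. v \<in> set C) Cs1) \<le> count_list w1 v"
      using less.hyps[OF l1(1)] c1 less.prems(4) unfolding w1_def w by auto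
    obtain Cs2 where C2: "\<forall>C\<in>set Cs2. is_cycle V E C" "set w2 \<subseteq> \<Union>(set ` set Cs2)"
        "\<forall>v. length (filter (\<lambda>C. v \<in> set C) Cs2) \<le> count_list w2 v"
      using less.hyps[OF l1(2)] c2 c2' less.prems(4) unfolding w2_def w by auto
    have "count_list w v = count_list w1 v + count_list w2 v" for v
      unfolding w w1_def w2_def by simp
    moreover have "set w = set w1 \<union> set w2" unfolding w w1_def w2_def by auto
    ultimately show ?thesis using C1 C2
      by (intro exI[of _ "Cs1 @ Cs2"]) (auto intro: add_mono)
  qed
qed

lemma seg_system:
  assumes "finite I" "inj_on \<sigma> I" "\<sigma> ` I \<subseteq> I"
    and "\<forall>i\<in>I. seg i \<noteq> [] \<and> walk E (seg i) \<and> set (seg i) \<subseteq> V \<and> (last (seg i), hd (seg (\<sigma> i))) \<in> E"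
  shows "\<exists>Cs. (\<forall>C\<in>set Cs. is_cycle V E C) \<and> (\<Union>i\<in>I. set (seg i)) \<subseteq> \<Union>(set ` set Cs) \<and>
     (\<forall>v. length (filter (\<lambda>C. v \<in> set C) Cs) \<le> (\<Sum>i\<in>I. count_list (seg i) v))"
  using assms
proof (induction "card I" arbitrary: I \<sigma> seg rule: less_induct)
  case less
  show ?case
  proof (cases "I = {}")
    case True then show ?thesis by (intro exI[of _ "[]"]) auto
  next
    case ne: False
    show ?thesis
    proof (cases "\<exists>i\<in>I. \<sigma> i = i")
      case True
      then obtain i where i: "i \<in> I" "\<sigma> i = i" by blast
      define I' where "I' = I - {i}"
      have cI: "card I' < card I" unfolding I'_def using i less.prems(1) by (metis card_Diff1_less)
      have inj': "inj_on \<sigma> I'" using less.prems(2) unfolding I'_def by (auto simp: inj_on_def)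
      have img': "\<sigma> ` I' \<subseteq> I'" using less.prems(2,3) i unfolding I'_def inj_on_def by auto
      obtain Cs2 where C2: "\<forall>C\<in>set Cs2. is_cycle V E C" "(\<Union>j\<in>I'. set (seg j)) \<subseteq> \<Union>(set ` set Cs2)"
        "\<forall>v. length (filter (\<lambda>C. v \<in> set C) Cs2) \<le> (\<Sum>j\<in>I'. count_list (seg j) v)"
        using less.hyps[OF cI, of \<sigma> seg] less.prems(1,4) inj' img' unfolding I'_def by auto
      obtain Cs1 where C1: "\<forall>C\<in>set Cs1. is_cycle V E C" "set (seg i) \<subseteq> \<Union>(set ` set Cs1)"
        "\<forall>v. length (filter (\<lambda>C. v \<in> set C) Cs1) \<le> count_list (seg i) v"
        using closed_walk_decomp[of "seg i" E V] less.prems(4) i by metis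
      have sum: "(\<Sum>j\<in>I. count_list (seg j) v) = count_list (seg i) v + (\<Sum>j\<in>I'. count_list (seg j) v)" for v
        unfolding I'_def using i less.prems(1) by (simp add: sum.remove)
      have un: "(\<Union>j\<in>I. set (seg j)) = set (seg i) \<union> (\<Union>j\<in>I'. set (seg j))" unfolding I'_def using i by auto
      show ?thesis using C1 C2 un sum
        by (intro exI[of _ "Cs1 @ Cs2"]) (auto intro: add_mono)
    next
      case False
      from ne obtain i where i: "i \<in> I" by blast
      define j where "j = \<sigma> i"
      have j: "j \<in> I" "j \<noteq> i" using i False less.prems(3) unfolding j_def by auto
      have sj: "\<sigma> j \<noteq> j" "\<sigma> j \<in> I" using j False less.prems(3) by auto
      define I' where "I' = I - {j}"
      define seg' where "seg' = seg(i := seg i @ seg j)"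
      define \<sigma>' where "\<sigma>' = \<sigma>(i := \<sigma> j)"
      have cI: "card I' < card I" unfolding I'_def using j less.prems(1) by (metis card_Diff1_less)
      have img': "\<sigma>' ` I' \<subseteq> I'"
      proof
        fix x assume "x \<in> \<sigma>' ` I'"
        then obtain l where l: "l \<in> I'" "x = \<sigma>' l" by blast
        show "x \<in> I'"
        proof (cases "l = i")
          case True then show ?thesis using l sj unfolding I'_def \<sigma>'_def by auto
        next
          case False
          then have "\<sigma> l \<noteq> j" using less.prems(2) l i unfolding j_def I'_def inj_on_def by auto
          then show ?thesis using l False less.prems(3) unfolding I'_def \<sigma>'_def by auto
        qed
      qed
      have inj': "inj_on \<sigma>' I'"
      proof (rule inj_onI)
        fix x y assume xy: "x \<in> I'" "y \<in> I'" "\<sigma>' x = \<sigma>' y"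
        have ij: "\<And>l. l \<in> I' \<Longrightarrow> l \<noteq> i \<Longrightarrow> \<sigma> l \<noteq> \<sigma> j"
          using less.prems(2) j unfolding I'_def inj_on_def by auto
        show "x = y"
          using xy ij[of x] ij[of y] less.prems(2) i j unfolding \<sigma>'_def I'_def inj_on_def
          by (auto split: if_splits)
      qed
      have P': "\<forall>l\<in>I'. seg' l \<noteq> [] \<and> walk E (seg' l) \<and> set (seg' l) \<subseteq> V \<and> (last (seg' l), hd (seg' (\<sigma>' l))) \<in> E"
      proof
        fix l assume l: "l \<in> I'"
        have Pl: "seg l \<noteq> [] \<and> walk E (seg l) \<and> set (seg l) \<subseteq> V \<and> (last (seg l), hd (seg (\<sigma> l))) \<in> E"
          using less.prems(4) l unfolding I'_def by auto
        have Pi: "seg i \<noteq> [] \<and> walk E (seg i) \<and> set (seg i) \<subseteq> V \<and> (last (seg i), hd (seg j)) \<in> E"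
          using less.prems(4) i unfolding j_def by auto
        have Pj: "seg j \<noteq> [] \<and> walk E (seg j) \<and> set (seg j) \<subseteq> V \<and> (last (seg j), hd (seg (\<sigma> j))) \<in> E"
          using less.prems(4) j by auto
        have hd': "hd (seg' x) = hd (seg x)" for x
          unfolding seg'_def using Pi by auto
        show "seg' l \<noteq> [] \<and> walk E (seg' l) \<and> set (seg' l) \<subseteq> V \<and> (last (seg' l), hd (seg' (\<sigma>' l))) \<in> E"
        proof (cases "l = i")
          case True
          then show ?thesis using Pi Pj hd' unfolding seg'_def \<sigma>'_def
            by (auto simp: successively_append_iff)
        next
          case False
          then show ?thesis using Pl hd' unfolding seg'_def \<sigma>'_def by auto
        qed
      qed
      obtain Cs where C: "\<forall>C\<in>set Cs. is_cycle V E C" "(\<Union>l\<in>I'. set (seg' l)) \<subseteq> \<Union>(set ` set Cs)"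
        "\<forall>v. length (filter (\<lambda>C. v \<in> set C) Cs) \<le> (\<Sum>l\<in>I'. count_list (seg' l) v)"
        using less.hyps[OF cI, of \<sigma>' seg'] less.prems(1) inj' img' P' unfolding I'_def by auto
      have iI': "i \<in> I'" unfolding I'_def using i j by auto
      have fI': "finite I'" unfolding I'_def using less.prems(1) by auto
      have sum: "(\<Sum>l\<in>I'. count_list (seg' l) v) = (\<Sum>l\<in>I. count_list (seg l) v)" for v
      proof -
        have 1: "(\<Sum>l\<in>I'. count_list (seg' l) v) = count_list (seg' i) v + (\<Sum>l\<in>I'-{i}. count_list (seg' l) v)"
          using iI' fI' by (simp add: sum.remove)
        have 2: "(\<Sum>l\<in>I'-{i}. count_list (seg' l) v) = (\<Sum>l\<in>I'-{i}. count_list (seg l) v)"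
          unfolding seg'_def by (intro sum.cong) auto
        have 3: "count_list (seg' i) v = count_list (seg i) v + count_list (seg j) v"
          unfolding seg'_def by simp
        have 4: "(\<Sum>l\<in>I. count_list (seg l) v) = count_list (seg j) v + (\<Sum>l\<in>I'. count_list (seg l) v)"
          unfolding I'_def using j less.prems(1) by (simp add: sum.remove)
        have 5: "(\<Sum>l\<in>I'. count_list (seg l) v) = count_list (seg i) v + (\<Sum>l\<in>I'-{i}. count_list (seg l) v)"
          using iI' fI' by (simp add: sum.remove)
        show ?thesis using 1 2 3 4 5 by linarith
      qed
      have un: "(\<Union>l\<in>I'. set (seg' l)) = (\<Union>l\<in>I. set (seg l))"
      proof
        show "(\<Union>l\<in>I'. set (seg' l)) \<subseteq> (\<Union>l\<in>I. set (seg l))"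
          unfolding I'_def seg'_def using i j by (auto split: if_splits)
      next
        show "(\<Union>l\<in>I. set (seg l)) \<subseteq> (\<Union>l\<in>I'. set (seg' l))"
        proof
          fix x assume "x \<in> (\<Union>l\<in>I. set (seg l))"
          then obtain l where l: "l \<in> I" "x \<in> set (seg l)" by blast
          show "x \<in> (\<Union>l\<in>I'. set (seg' l))"
          proof (cases "l = j \<or> l = i")
            case True then show ?thesis using l iI' unfolding seg'_def by (intro UN_I[of i]) auto
          next
            case False then show ?thesis using l unfolding seg'_def I'_def by (intro UN_I[of l]) auto
          qed
        qed
      qed
      show ?thesis using C sum un by (intro exI[of _ Cs]) auto
    qed
  qed
qed

lemma split_filter:
  "n \<le> length (filter P xs) \<Longrightarrow> \<exists>ys zs. xs = ys @ zs \<and> length (filter P ys) = n"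
proof (induction xs arbitrary: n)
  case Nil then have "n = 0" by simp
  then show ?case by auto
next
  case (Cons x xs)
  show ?case
  proof (cases n)
    case 0
    then have "x # xs = [] @ (x#xs) \<and> length (filter P []) = n" by simp
    then show ?thesis by blast
  next
    case (Suc n')
    show ?thesis
    proof (cases "P x")
      case True
      then obtain ys zs where "xs = ys @ zs" "length (filter P ys) = n'"
        using Cons.IH[of n'] Cons.prems Suc True by auto
      then show ?thesis using True Suc by (intro exI[of _ "x # ys"] exI[of _ zs]) auto
    next
      case False
      then obtain ys zs where "xs = ys @ zs" "length (filter P ys) = n"
        using Cons.IH[of n] Cons.prems by auto
      then show ?thesis using False by (intro exI[of _ "x # ys"] exI[of _ zs]) auto
    qed
  qed
qed

lemma card_filter_distinct: "distinct xs \<Longrightarrow> card (set xs \<inter> D) = length (filter (\<lambda>v. v \<in> D) xs)"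
proof -
  assume "distinct xs"
  then have "card (set (filter (\<lambda>v. v \<in> D) xs)) = length (filter (\<lambda>v. v \<in> D) xs)"
    by (intro distinct_card) simp
  moreover have "set (filter (\<lambda>v. v \<in> D) xs) = set xs \<inter> D" by auto
  ultimately show ?thesis by simp
qed

definition good_seg where
  "good_seg V E D b P A B \<longleftrightarrow> is_path V E P \<and> A \<subseteq> set P \<and> B \<subseteq> set P \<and> A \<subseteq> D \<and> B \<subseteq> D \<and>
     card A = b \<and> card B = b \<and> A \<inter> B = {} \<and>
     (\<forall>x\<in>A. \<forall>y\<in>B. \<exists>m n. m < n \<and> n < length P \<and> P ! m = x \<and> P ! n = y)"

lemma one_seg:
  assumes "distinct C" "walk E C" "set C \<subseteq> V" "b \<ge> 1" "length (filter (\<lambda>v. v \<in> D) C) = 2*b"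
  shows "\<exists>A B. good_seg V E D b C A B"
proof -
  obtain C1 C2 where C: "C = C1 @ C2" "length (filter (\<lambda>v. v \<in> D) C1) = b"
    using split_filter[of b "\<lambda>v. v \<in> D" C] assms(5) by auto
  have l2: "length (filter (\<lambda>v. v \<in> D) C2) = b" using C assms(5) by simp
  define A where "A = set C1 \<inter> D"
  define B where "B = set C2 \<inter> D"
  have d: "distinct C1" "distinct C2" "set C1 \<inter> set C2 = {}" using assms(1) C by auto
  have "card A = b" unfolding A_def using card_filter_distinct[OF d(1)] C by simp
  moreover have "card B = b" unfolding B_def using card_filter_distinct[OF d(2)] l2 by simp
  moreover have "C \<noteq> []" using assms(4,5) by auto
  moreover have "\<forall>x\<in>A. \<forall>y\<in>B. \<exists>m n. m < n \<and> n < length C \<and> C ! m = x \<and> C ! n = y"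
  proof (intro ballI)
    fix x y assume xy: "x \<in> A" "y \<in> B"
    then obtain m where m: "m < length C1" "C1 ! m = x" unfolding A_def by (auto simp: in_set_conv_nth)
    obtain n where n: "n < length C2" "C2 ! n = y" using xy unfolding B_def by (auto simp: in_set_conv_nth)
    show "\<exists>m n. m < n \<and> n < length C \<and> C ! m = x \<and> C ! n = y"
      using m n C by (intro exI[of _ m] exI[of _ "length C1 + n"]) (auto simp: nth_append)
  qed
  ultimately show ?thesis unfolding good_seg_def is_path_iff using assms d
    by (intro exI[of _ A] exI[of _ B]) (auto simp: A_def B_def C)
qed

lemma chunks:
  assumes "distinct C" "walk E C" "set C \<subseteq> V" "b \<ge> 1" "length (filter (\<lambda>v. v \<in> D) C) \<ge> 2*b*a"
  shows "\<exists>P A B. (\<forall>i<a. good_seg V E D b (P i) (A i) (B i) \<and> set (P i) \<subseteq> set C) \<and>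
     (\<forall>i<a. \<forall>j<a. i \<noteq> j \<longrightarrow> set (P i) \<inter> set (P j) = {})"
  using assms
proof (induction a arbitrary: C)
  case 0 then show ?case by auto
next
  case (Suc a)
  obtain C1 C2 where C: "C = C1 @ C2" "length (filter (\<lambda>v. v \<in> D) C1) = 2*b"
    using split_filter[of "2*b" "\<lambda>v. v \<in> D" C] Suc.prems(5) by auto
  have d: "distinct C1" "distinct C2" "set C1 \<inter> set C2 = {}" using Suc.prems(1) C by auto
  have w: "walk E C1" "walk E C2" using Suc.prems(2) C walk_appD by blast+
  have l2: "length (filter (\<lambda>v. v \<in> D) C2) \<ge> 2*b*a" using C Suc.prems(5) by simp
  obtain P A B where IH: "\<forall>i<a. good_seg V E D b (P i) (A i) (B i) \<and> set (P i) \<subseteq> set C2"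
     "\<forall>i<a. \<forall>j<a. i \<noteq> j \<longrightarrow> set (P i) \<inter> set (P j) = {}"
    using Suc.IH[of C2] d w l2 Suc.prems C by auto
  obtain A0 B0 where G0: "good_seg V E D b C1 A0 B0"
    using one_seg[of C1 E V b D] d w C Suc.prems by auto
  define P' where "P' = case_nat C1 P"
  define A' where "A' = case_nat A0 A"
  define B' where "B' = case_nat B0 B"
  have "\<forall>i<Suc a. good_seg V E D b (P' i) (A' i) (B' i) \<and> set (P' i) \<subseteq> set C"
  proof (intro allI impI)
    fix i assume "i < Suc a"
    then show "good_seg V E D b (P' i) (A' i) (B' i) \<and> set (P' i) \<subseteq> set C"
      using G0 IH C unfolding P'_def A'_def B'_def by (cases i) auto
  qed
  moreover have "\<forall>i<Suc a. \<forall>j<Suc a. i \<noteq> j \<longrightarrow> set (P' i) \<inter> set (P' j) = {}"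
  proof (intro allI impI)
    fix i j assume ij: "i < Suc a" "j < Suc a" "i \<noteq> j"
    show "set (P' i) \<inter> set (P' j) = {}"
    proof (cases i)
      case 0
      then obtain j' where "j = Suc j'" "j' < a" using ij by (cases j) auto
      then have "set (P j') \<subseteq> set C2" using IH by blast
      then show ?thesis using 0 d \<open>j = Suc j'\<close> unfolding P'_def by auto
    next
      case (Suc i')
      have "set (P i') \<subseteq> set C2" using IH ij Suc by simp
      then have s1: "set (P i') \<inter> set C1 = {}" using d by blast
      show ?thesis
      proof (cases j)
        case 0 then show ?thesis using s1 Suc unfolding P'_def by auto
      next
        case (Suc j') then show ?thesis using IH ij \<open>i = Suc i'\<close> unfolding P'_def by auto
      qed
    qed
  qed
  ultimately show ?case by blast
qed

lemma filter_take_le: "length (filter P (take k xs)) \<le> length (filter P xs)"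
proof -
  have "length (filter P xs) = length (filter P (take k xs)) + length (filter P (drop k xs))"
    by (metis append_take_drop_id filter_append length_append)
  then show ?thesis by simp
qed

lemma dedup:
  assumes cyc: "\<forall>C\<in>set Cs. is_cycle V E C" and cov: "D \<subseteq> \<Union>(set ` set Cs)"
    and cnt: "\<forall>v. length (filter (\<lambda>C. v \<in> set C) Cs) \<le> 2"
    and sm: "\<forall>C\<in>set Cs. card (set C \<inter> D) \<le> m"
    and fD: "finite D" and big: "card D > (k - 1) * m"
  shows "half_integral_cycle_packing V E k"
proof -
  define S where "S = set Cs"
  define R where "R = cycle_edges ` S"
  define rep where "rep = inv_into S cycle_edges"
  have fR: "finite R" unfolding R_def S_def by simp
  obtain rs where rs: "set rs = R" "distinct rs" using finite_distinct_list[OF fR] by blast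
  define Cs' where "Cs' = map rep rs"
  have injr: "inj_on rep R" unfolding rep_def R_def by (rule inj_on_inv_into) simp
  have repS: "e \<in> R \<Longrightarrow> rep e \<in> S" for e unfolding rep_def R_def by (simp add: inv_into_into)
  have repE: "e \<in> R \<Longrightarrow> cycle_edges (rep e) = e" for e unfolding rep_def R_def by (simp add: f_inv_into_f)
  have nonemp: "C \<in> S \<Longrightarrow> C \<noteq> []" for C using cyc unfolding S_def is_cycle_def by auto
  have dCs': "distinct Cs'" unfolding Cs'_def using rs injr by (simp add: distinct_map)
  have lCs': "length Cs' = card R" unfolding Cs'_def using rs distinct_card by fastforce
  have setCs': "set Cs' = rep ` R" unfolding Cs'_def using rs by simp
  have covD: "D \<subseteq> (\<Union>C\<in>rep ` R. set C \<inter> D)"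
  proof
    fix d assume d: "d \<in> D"
    then obtain C where C: "C \<in> S" "d \<in> set C" using cov unfolding S_def by blast
    define e where "e = cycle_edges C"
    have eR: "e \<in> R" unfolding e_def R_def using C by simp
    have "set (rep e) = fst ` cycle_edges (rep e)" using set_cycle_edges[of "rep e"] nonemp repS[OF eR] by simp
    also have "\<dots> = fst ` e" using repE[OF eR] by simp
    also have "\<dots> = set C" unfolding e_def using set_cycle_edges nonemp[OF C(1)] by blast
    finally show "d \<in> (\<Union>C\<in>rep ` R. set C \<inter> D)" using C d eR by blast
  qed
  have "card D \<le> card (\<Union>C\<in>rep ` R. set C \<inter> D)" using covD by (intro card_mono) (auto simp: fR)
  also have "\<dots> \<le> (\<Sum>C\<in>rep ` R. card (set C \<inter> D))" by (rule card_UN_le) (simp add: fR)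
  also have "\<dots> \<le> (\<Sum>C\<in>rep ` R. m)" using sm repS unfolding S_def by (intro sum_mono) auto
  also have "\<dots> = card (rep ` R) * m" by simp
  also have "\<dots> = card R * m" using card_image[OF injr] by simp
  finally have "card D \<le> card R * m" .
  then have kR: "k \<le> card R"
  proof -
    assume h: "card D \<le> card R * m"
    show "k \<le> card R"
    proof (rule ccontr)
      assume "\<not> k \<le> card R"
      then have "card R \<le> k - 1" by simp
      then have "card R * m \<le> (k - 1) * m" by (rule mult_right_mono) simp
      then show False using h big by linarith
    qed
  qed
  define Cs'' where "Cs'' = take k Cs'"
  have lk: "length Cs'' = k" unfolding Cs''_def using kR lCs' by simp
  have nthC: "i < k \<Longrightarrow> Cs'' ! i = rep (rs ! i)" for i
    unfolding Cs''_def Cs'_def using kR lCs' rs distinct_card[of rs] by (simp)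
  have rsl: "length rs = card R" using rs distinct_card by fastforce
  show ?thesis unfolding half_integral_cycle_packing_def
  proof (intro exI[of _ Cs''] conjI ballI allI impI)
    show "length Cs'' = k" by (rule lk)
  next
    fix C assume "C \<in> set Cs''"
    then have "C \<in> set Cs'" unfolding Cs''_def using in_set_takeD by fast
    then show "is_cycle V E C" using setCs' repS cyc unfolding S_def by auto
  next
    fix i j assume ij: "i < k" "j < k" "i \<noteq> j"
    have "rs ! i \<noteq> rs ! j" using ij rs(2) kR rsl by (simp add: nth_eq_iff_index_eq)
    moreover have "rs ! i \<in> R" "rs ! j \<in> R" using ij kR rsl rs(1) nth_mem by fastforce+
    ultimately show "cycle_edges (Cs'' ! i) \<noteq> cycle_edges (Cs'' ! j)"
      using nthC ij repE by simp
  next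
    fix v assume "v \<in> V"
    have "card {i. i < k \<and> v \<in> set (Cs'' ! i)} = length (filter (\<lambda>C. v \<in> set C) Cs'')"
      using lk by (simp add: length_filter_conv_card)
    also have "\<dots> \<le> length (filter (\<lambda>C. v \<in> set C) Cs')" unfolding Cs''_def by (rule filter_take_le)
    also have "\<dots> = card (set (filter (\<lambda>C. v \<in> set C) Cs'))"
      using dCs' distinct_card[of "filter (\<lambda>C. v \<in> set C) Cs'"] by simp
    also have "\<dots> \<le> card (set (filter (\<lambda>C. v \<in> set C) Cs))"
      using setCs' repS unfolding S_def by (intro card_mono) auto
    also have "\<dots> \<le> length (filter (\<lambda>C. v \<in> set C) Cs)" by (rule card_length)
    also have "\<dots> \<le> 2" using cnt by simp
    finally show "card {i. i < k \<and> v \<in> set (Cs'' ! i)} \<le> 2" .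
  qed
qed

lemma linkage_bij:
  assumes "linkage_in V E U A B" "finite A" "finite B" "card A = card B"
  obtains L where "finite L" "\<forall>P\<in>L. is_path V E P \<and> hd P \<in> A \<and> last P \<in> B"
    "\<forall>P\<in>L. \<forall>Q\<in>L. P \<noteq> Q \<longrightarrow> set P \<inter> set Q = {}" "bij_betw hd L A" "bij_betw last L B"
proof -
  obtain L where L: "finite L" "card L = card A"
     "\<forall>P\<in>L. is_path V E P \<and> set P \<subseteq> U \<and> hd P \<in> A \<and> last P \<in> B"
     "\<forall>P\<in>L. \<forall>Q\<in>L. P \<noteq> Q \<longrightarrow> set P \<inter> set Q = {}"
    using assms(1) unfolding linkage_in_def by blast
  have ne: "P \<in> L \<Longrightarrow> P \<noteq> []" for P using L(3) unfolding is_path_def by auto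
  have ih: "inj_on hd L"
  proof (rule inj_onI)
    fix P Q assume "P \<in> L" "Q \<in> L" "hd P = hd Q"
    then show "P = Q" using L(4) ne[of P] ne[of Q] hd_in_set[of P] hd_in_set[of Q] by (metis disjoint_iff)
  qed
  have il: "inj_on last L"
  proof (rule inj_onI)
    fix P Q assume "P \<in> L" "Q \<in> L" "last P = last Q"
    then show "P = Q" using L(4) ne[of P] ne[of Q] last_in_set[of P] last_in_set[of Q] by (metis disjoint_iff)
  qed
  have "hd ` L = A"
    using L(3) card_image[OF ih] L(2) assms(2) by (intro card_subset_eq) auto
  moreover have "last ` L = B"
    using L(3) card_image[OF il] L(2) assms(3,4) by (intro card_subset_eq) auto
  ultimately show ?thesis using that L ih il unfolding bij_betw_def by blast
qed

lemma count_butlast_le: "count_list (butlast xs) v \<le> count_list xs v"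
proof (cases "xs = []")
  case False
  then have "count_list xs v = count_list (butlast xs) v + count_list [last xs] v"
    by (metis append_butlast_last_id count_list_append)
  then show ?thesis by simp
qed simp

lemma count_tl_le: "count_list (tl xs) v \<le> count_list xs v"
  by (cases xs) auto

lemma disjoint_count_sum:
  assumes "finite L" "\<forall>P\<in>L. distinct P" "\<forall>P\<in>L. \<forall>Q\<in>L. P \<noteq> Q \<longrightarrow> set P \<inter> set Q = {}"
  shows "(\<Sum>P\<in>L. count_list P v) \<le> 1"
proof (cases "\<exists>P0\<in>L. v \<in> set P0")
  case True
  then obtain P0 where P0: "P0 \<in> L" "v \<in> set P0" by blast
  have "(\<Sum>P\<in>L. count_list P v) = (\<Sum>P\<in>L. if P = P0 then 1 else 0)"
  proof (intro sum.cong refl)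
    fix P assume "P \<in> L"
    then show "count_list P v = (if P = P0 then 1 else 0)"
      using assms(2,3) P0 count_distinct[of P v] by auto
  qed
  also have "\<dots> = 1" using P0 assms(1) by simp
  finally show ?thesis by simp
next
  case False
  then have "(\<Sum>P\<in>L. count_list P v) = 0" by (intro sum.neutral) auto
  then show ?thesis by simp
qed

lemma subset_well_linked:
  assumes "well_linked V E W" "W' \<subseteq> W"
  shows "well_linked V E W'"
  unfolding well_linked_def
proof (intro conjI allI impI)
  show "W' \<subseteq> V" using assms unfolding well_linked_def by auto
next
  fix A B assume AB: "A \<subseteq> W'" "B \<subseteq> W'" "card A = card B"
  then have "linkage_in V E (V - (W - (A \<union> B))) A B" using assms unfolding well_linked_def by auto
  moreover have "V - (W - (A \<union> B)) \<subseteq> V - (W' - (A \<union> B))" using assms(2) by auto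
  ultimately show "linkage_in V E (V - (W' - (A \<union> B))) A B" unfolding linkage_in_def by blast
qed

lemma cover_lemma:
  assumes fV: "finite V" and XY: "X \<inter> Y = {}" "finite X" "finite Y" "card X = card Y"
    and lXY: "linkage_in V E V X Y" and lYX: "linkage_in V E V Y X"
  shows "\<exists>Cs. (\<forall>C\<in>set Cs. is_cycle V E C) \<and> X \<union> Y \<subseteq> \<Union>(set ` set Cs) \<and>
     (\<forall>v. length (filter (\<lambda>C. v \<in> set C) Cs) \<le> 2)"
proof -
  obtain L where L: "finite L" "\<forall>P\<in>L. is_path V E P \<and> hd P \<in> X \<and> last P \<in> Y"
    "\<forall>P\<in>L. \<forall>Q\<in>L. P \<noteq> Q \<longrightarrow> set P \<inter> set Q = {}" "bij_betw hd L X" "bij_betw last L Y"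
    using linkage_bij[OF lXY XY(2,3,4)] by blast
  obtain M where M: "finite M" "\<forall>P\<in>M. is_path V E P \<and> hd P \<in> Y \<and> last P \<in> X"
    "\<forall>P\<in>M. \<forall>Q\<in>M. P \<noteq> Q \<longrightarrow> set P \<inter> set Q = {}" "bij_betw hd M Y" "bij_betw last M X"
    using linkage_bij[OF lYX XY(3,2)] XY(4) by metis
  define p where "p = inv_into L hd"
  define q where "q = inv_into M hd"
  have bp: "bij_betw p X L" unfolding p_def using L(4) by (rule bij_betw_inv_into)
  have bq: "bij_betw q Y M" unfolding q_def using M(4) by (rule bij_betw_inv_into)
  have hdp: "x \<in> X \<Longrightarrow> hd (p x) = x" for x unfolding p_def using L(4)
    by (simp add: bij_betw_def f_inv_into_f)
  have hdq: "y \<in> Y \<Longrightarrow> hd (q y) = y" for y unfolding q_def using M(4)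
    by (simp add: bij_betw_def f_inv_into_f)
  define \<sigma> where "\<sigma> = last \<circ> (q \<circ> (last \<circ> p))"
  define r where "r = q \<circ> (last \<circ> p)"
  have br: "bij_betw r X M" unfolding r_def
    by (intro bij_betw_trans[OF bij_betw_trans[OF bp L(5)] bq])
  have bs: "bij_betw \<sigma> X X" unfolding \<sigma>_def
    by (intro bij_betw_trans[OF bij_betw_trans[OF bij_betw_trans[OF bp L(5)] bq] M(5)])
  define seg where "seg x = butlast (p x @ tl (q (last (p x))))" for x
  have props: "seg x \<noteq> [] \<and> walk E (seg x) \<and> set (seg x) \<subseteq> V \<and> (last (seg x), \<sigma> x) \<in> E \<and>
      hd (seg x) = x \<and> set (p x) \<subseteq> set (seg x) \<and>
      count_list (seg x) v \<le> count_list (p x) v + count_list (r x) v" if x: "x \<in> X" for x v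
  proof -
    define P where "P = p x"
    define Q where "Q = r x"
    have PL: "P \<in> L" unfolding P_def using bp x bij_betwE by blast
    have QM: "Q \<in> M" unfolding Q_def using br x bij_betwE by blast
    have Pp: "is_path V E P" "hd P = x" "last P \<in> Y" using L(2) PL hdp x unfolding P_def by auto
    have Qp: "is_path V E Q" "hd Q = last P" "last Q \<in> X" "last Q = \<sigma> x"
      using M(2) QM hdq Pp unfolding Q_def r_def \<sigma>_def P_def by auto
    have hQ: "hd Q \<noteq> last Q" using Qp(2,3) Pp(3) XY(1) by auto
    have Qne: "Q \<noteq> []" using Qp(1) unfolding is_path_def by auto
    have tQ: "tl Q \<noteq> []"
    proof
      assume "tl Q = []"
      then have "Q = [hd Q]" using Qne by (cases Q) auto
      then have "hd Q = last Q" by (metis last_ConsL)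
      then show False using hQ by simp
    qed
    have Qw: "walk E (hd Q # tl Q)" using Qp(1) Qne unfolding is_path_iff by simp
    then have Qw': "walk E (tl Q)" "(hd Q, hd (tl Q)) \<in> E" using tQ by (auto simp: successively_Cons)
    have Pne: "P \<noteq> []" using Pp(1) unfolding is_path_def by auto
    define w where "w = P @ tl Q"
    have ww: "walk E w" unfolding w_def using Pp(1) Qw' Qp(2) Pne tQ
      by (auto simp: successively_append_iff is_path_iff)
    have sx: "seg x = butlast w" unfolding seg_def w_def P_def Q_def r_def by simp
    have bw: "butlast w = P @ butlast (tl Q)" unfolding w_def using tQ by (simp add: butlast_append)
    have bne: "butlast w \<noteq> []" using bw Pne by simp
    have wsplit: "w = butlast w @ [last w]" unfolding w_def using Pne by (intro append_butlast_last_id[symmetric]) simp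
    have "walk E (butlast w) \<and> (last (butlast w), last w) \<in> E"
      using ww bne successively_append_iff[of _ "butlast w" "[last w]"] wsplit by (metis list.sel(1) list.distinct(1))
    moreover have "last w = \<sigma> x" unfolding w_def using tQ Qp(4) Qne by (simp add: last_tl)
    moreover have "set (seg x) \<subseteq> V" using sx bw Pp(1) Qp(1) unfolding is_path_def
      by (auto dest: in_set_butlastD list.set_sel(2))
    moreover have "count_list (seg x) v \<le> count_list P v + count_list Q v"
    proof -
      have "count_list (seg x) v = count_list P v + count_list (butlast (tl Q)) v" using sx bw by simp
      also have "\<dots> \<le> count_list P v + count_list Q v"
        using count_butlast_le[of "tl Q" v] count_tl_le[of Q v] by simp
      finally show ?thesis .
    qed
    ultimately show ?thesis using sx bw bne Pne Pp(2) unfolding P_def Q_def by auto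
  qed
  have cond: "\<forall>i\<in>X. seg i \<noteq> [] \<and> walk E (seg i) \<and> set (seg i) \<subseteq> V \<and> (last (seg i), hd (seg (\<sigma> i))) \<in> E"
  proof
    fix i assume i: "i \<in> X"
    then have "\<sigma> i \<in> X" using bs bij_betwE by blast
    then show "seg i \<noteq> [] \<and> walk E (seg i) \<and> set (seg i) \<subseteq> V \<and> (last (seg i), hd (seg (\<sigma> i))) \<in> E"
      using props[OF i] props[of "\<sigma> i"] by auto
  qed
  obtain Cs where Cs: "\<forall>C\<in>set Cs. is_cycle V E C" "(\<Union>i\<in>X. set (seg i)) \<subseteq> \<Union>(set ` set Cs)"
     "\<forall>v. length (filter (\<lambda>C. v \<in> set C) Cs) \<le> (\<Sum>i\<in>X. count_list (seg i) v)"
    using seg_system[of X \<sigma> seg E V] XY(2) bs cond unfolding bij_betw_def by blast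
  have sum2: "(\<Sum>i\<in>X. count_list (seg i) v) \<le> 2" for v
  proof -
    have "(\<Sum>i\<in>X. count_list (seg i) v) \<le> (\<Sum>i\<in>X. count_list (p i) v + count_list (r i) v)"
      using props by (intro sum_mono) auto
    also have "\<dots> = (\<Sum>i\<in>X. count_list (p i) v) + (\<Sum>i\<in>X. count_list (r i) v)" by (rule sum.distrib)
    also have "(\<Sum>i\<in>X. count_list (p i) v) = (\<Sum>P\<in>L. count_list P v)"
      using sum.reindex_bij_betw[OF bp, of "\<lambda>P. count_list P v"] .
    also have "(\<Sum>i\<in>X. count_list (r i) v) = (\<Sum>P\<in>M. count_list P v)"
      using sum.reindex_bij_betw[OF br, of "\<lambda>P. count_list P v"] .
    also have "(\<Sum>P\<in>L. count_list P v) \<le> 1"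
      using L(1,2,3) by (intro disjoint_count_sum) (auto simp: is_path_def)
    also have "(\<Sum>P\<in>M. count_list P v) \<le> 1"
      using M(1,2,3) by (intro disjoint_count_sum) (auto simp: is_path_def)
    finally show ?thesis by simp
  qed
  have "X \<union> Y \<subseteq> (\<Union>i\<in>X. set (seg i))"
  proof
    fix z assume "z \<in> X \<union> Y"
    then show "z \<in> (\<Union>i\<in>X. set (seg i))"
    proof
      assume z: "z \<in> X"
      then have "hd (seg z) \<in> set (seg z)" using props[OF z] by (intro hd_in_set) auto
      then show ?thesis using z props[OF z] by auto
    next
      assume z: "z \<in> Y"
      then obtain P where P: "P \<in> L" "last P = z" using L(5) unfolding bij_betw_def by blast
      define x where "x = hd P"
      have x: "x \<in> X" unfolding x_def using L(2) P by auto
      have "p x = P" unfolding p_def x_def using L(4) P(1) unfolding bij_betw_def by (simp add: inv_into_f_f)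
      moreover have "P \<noteq> []" using L(2) P(1) unfolding is_path_def by auto
      ultimately have "z \<in> set (p x)" using P by auto
      then show ?thesis using x props[OF x] by blast
    qed
  qed
  then show ?thesis using Cs sum2 by (intro exI[of _ Cs]) (auto intro: order_trans)
qed

theorem lemma19:
  fixes V :: "'a set" and E :: "('a \<times> 'a) set" and D :: "'a set" and a b k :: nat
  assumes "finite V" and "E \<subseteq> V \<times> V"
    and "a \<ge> 1" and "b \<ge> 1" and "k \<ge> 1"
    and "D \<subseteq> V" and "card D = 2 * (a * b * (2 * k - 2) + 1)"
    and "well_linked V E D"
    and "\<not> half_integral_cycle_packing V E k"
  shows "\<exists>(P :: nat \<Rightarrow> 'a list) (A :: nat \<Rightarrow> 'a set) (B :: nat \<Rightarrow> 'a set).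
    (\<forall>i\<in>{1..a}. is_path V E (P i) \<and> A i \<subseteq> set (P i) \<and> B i \<subseteq> set (P i)) \<and>
    (\<forall>i\<in>{1..a}. \<forall>j\<in>{1..a}. i \<noteq> j \<longrightarrow> set (P i) \<inter> set (P j) = {}) \<and>
    (\<forall>i\<in>{1..a}. card (A i) = b \<and> card (B i) = b \<and> A i \<inter> B i = {}) \<and>
    (\<forall>i\<in>{1..a}. \<forall>j\<in>{1..a}. i \<noteq> j \<longrightarrow>
        A i \<inter> A j = {} \<and> A i \<inter> B j = {} \<and> B i \<inter> B j = {}) \<and>
    (\<forall>i\<in>{1..a}. \<forall>x\<in>A i. \<forall>y\<in>B i.
        \<exists>m n. m < n \<and> n < length (P i) \<and> P i ! m = x \<and> P i ! n = y) \<and>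
    well_linked V E (\<Union>i\<in>{1..a}. A i \<union> B i)"
proof -
  define N where "N = a * b * (2 * k - 2) + 1"
  have fD: "finite D" using assms(1,6) finite_subset by blast
  obtain X where X: "X \<subseteq> D" "card X = N" "finite X"
    using obtain_subset_with_card_n[of N D] assms(7) unfolding N_def by auto
  define Y where "Y = D - X"
  have cY: "card Y = N" unfolding Y_def using X assms(7) fD by (simp add: card_Diff_subset N_def)
  have fY: "finite Y" unfolding Y_def using fD by simp
  have XY: "X \<inter> Y = {}" "X \<union> Y = D" unfolding Y_def using X by auto
  have l1: "linkage_in V E V X Y" using assms(8) XY X(2) cY unfolding well_linked_def by (metis Diff_cancel Diff_empty Un_upper1 Un_upper2)
  have l2: "linkage_in V E V Y X" using assms(8) XY X(2) cY unfolding well_linked_def by (metis Diff_cancel Diff_empty Un_upper1 Un_upper2 sup_commute)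
  obtain Cs where Cs: "\<forall>C\<in>set Cs. is_cycle V E C" "X \<union> Y \<subseteq> \<Union>(set ` set Cs)"
     "\<forall>v. length (filter (\<lambda>C. v \<in> set C) Cs) \<le> 2"
    using cover_lemma[OF assms(1) XY(1) X(3) fY _ l1 l2] X(2) cY by metis
  show ?thesis
  proof (cases "\<exists>C\<in>set Cs. card (set C \<inter> D) \<ge> 2 * a * b")
    case False
    then have sm: "\<forall>C\<in>set Cs. card (set C \<inter> D) \<le> 2 * a * b - 1" by auto
    have "(k - 1) * (2 * a * b - 1) \<le> (k - 1) * (2 * a * b)" by (intro mult_le_mono) auto
    moreover have "(k - 1) * (2 * a * b) = a * b * (2 * k - 2)" by (simp add: algebra_simps diff_mult_distrib2)
    moreover have "a * b * (2 * k - 2) < card D" using assms(7) by simp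
    ultimately have "card D > (k - 1) * (2 * a * b - 1)" by (metis le_less_trans)
    then have "half_integral_cycle_packing V E k"
      using dedup[OF Cs(1) _ Cs(3) sm fD] Cs(2) XY(2) by auto
    then show ?thesis using assms(9) by simp
  next
    case True
    then obtain C where C: "C \<in> set Cs" "card (set C \<inter> D) \<ge> 2 * a * b" by blast
    have cC: "is_cycle V E C" using Cs(1) C(1) by auto
    have dC: "distinct C" "set C \<subseteq> V" using cC unfolding is_cycle_def by auto
    have "length (filter (\<lambda>v. v \<in> D) C) \<ge> 2 * b * a"
      using C(2) card_filter_distinct[OF dC(1), of D] by (simp add: mult.commute mult.left_commute)
    then obtain P A B where PAB: "\<forall>i<a. good_seg V E D b (P i) (A i) (B i) \<and> set (P i) \<subseteq> set C"
       "\<forall>i<a. \<forall>j<a. i \<noteq> j \<longrightarrow> set (P i) \<inter> set (P j) = {}"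
      using chunks[OF dC(1) is_cycle_walk[OF cC] dC(2) assms(4)] by blast
    define P' where "P' i = P (i - 1)" for i
    define A' where "A' i = A (i - 1)" for i
    define B' where "B' i = B (i - 1)" for i
    have G: "i \<in> {1..a} \<Longrightarrow> good_seg V E D b (P' i) (A' i) (B' i)" for i
      using PAB(1) unfolding P'_def A'_def B'_def by auto
    have Dj: "i \<in> {1..a} \<Longrightarrow> j \<in> {1..a} \<Longrightarrow> i \<noteq> j \<Longrightarrow> set (P' i) \<inter> set (P' j) = {}" for i j
    proof -
      assume ij: "i \<in> {1..a}" "j \<in> {1..a}" "i \<noteq> j"
      then have "i - 1 < a" "j - 1 < a" "i - 1 \<noteq> j - 1" by auto
      then show ?thesis using PAB(2) unfolding P'_def by blast
    qed
    have WL: "well_linked V E (\<Union>i\<in>{1..a}. A' i \<union> B' i)"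
    proof (rule subset_well_linked[OF assms(8)])
      have "\<And>i. i \<in> {1..a} \<Longrightarrow> A' i \<union> B' i \<subseteq> D" using G unfolding good_seg_def by blast
      then show "(\<Union>i\<in>{1..a}. A' i \<union> B' i) \<subseteq> D" by blast
    qed
    have c1: "\<forall>i\<in>{1..a}. is_path V E (P' i) \<and> A' i \<subseteq> set (P' i) \<and> B' i \<subseteq> set (P' i)"
      "\<forall>i\<in>{1..a}. card (A' i) = b \<and> card (B' i) = b \<and> A' i \<inter> B' i = {}"
      using G unfolding good_seg_def by auto
    have c2: "\<forall>i\<in>{1..a}. \<forall>x\<in>A' i. \<forall>y\<in>B' i. \<exists>m n. m < n \<and> n < length (P' i) \<and> P' i ! m = x \<and> P' i ! n = y"
      using G unfolding good_seg_def by blast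
    have c3: "\<forall>i\<in>{1..a}. \<forall>j\<in>{1..a}. i \<noteq> j \<longrightarrow> set (P' i) \<inter> set (P' j) = {}"
      using Dj by blast
    have c4: "\<forall>i\<in>{1..a}. \<forall>j\<in>{1..a}. i \<noteq> j \<longrightarrow> A' i \<inter> A' j = {} \<and> A' i \<inter> B' j = {} \<and> B' i \<inter> B' j = {}"
    proof (intro ballI impI)
      fix i j assume ij: "i \<in> {1..a}" "j \<in> {1..a}" "i \<noteq> j"
      have "A' i \<union> B' i \<subseteq> set (P' i)" "A' j \<union> B' j \<subseteq> set (P' j)" using c1 ij by auto
      then show "A' i \<inter> A' j = {} \<and> A' i \<inter> B' j = {} \<and> B' i \<inter> B' j = {}" using Dj[OF ij] by blast
    qed
    show ?thesis
      apply (rule exI[of _ P'])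
      apply (rule exI[of _ A'])
      apply (rule exI[of _ B'])
      using c1 c2 c3 c4 WL by blast
  qed
qed

end
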